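(* Let $X$ be a triangulable space, $G$ a subgroup of $\operatorname{Homeo}(X)$, $\varphi:X\to\mathbb{R}^k$ continuous, and $(\bar C,\partial)$ a $G$-chain subcomplex of the singular chain complex $(S(X),\partial)$ over a field $\mathbb{K}$ satisfying property $( * )$. Let $\bar\varphi$ be the filtering function on $\bar C$ induced by $\varphi$. Then for every $n\in\mathbb{Z}$ and every $u,v\in\mathbb{R}^k$ with $u\prec v$, the persistent Betti number $\rho^{\bar\varphi}_n(u,v)$ of $(\bar C,\partial)$ with respect to $\bar\varphi$ is finite.
   Context: Order on $\mathbb{R}^k$: $u\preceq v$ iff $u_j\le v_j$ for all $j$; $u\prec v$ iff $u_j<v_j$ for all $j$. $X^{\varphi\preceq u}=\{x\in X:\varphi(x)\preceq u\}$. $G\subseteq\operatorname{Homeo}(X)$ acts on $S(X)$ by $g(\sigma)=g\circ\sigma$ on singular simplices, extended linearly. A $G$-chain subcomplex $\bar C$ of $S(X)$ is a chain subcomplex such that each $g\in G$ restricts to a chain isomorphism $\bar C\to\bar C$. For a subspace $Y\subseteq X$, $\bar C\cap S(Y)$ denotes the chain complex whose $n$-chains are the singular $n$-chains in $Y$ belonging to $\bar C_n$. Property $( * )$: whenever $X',X''$ are closed subsets of $X$ with $X'\subseteq\operatorname{int}(X'')$, there is a subspace $\hat X$ with $X'\subseteq\hat X\subseteq X''$ such that $H_n(\bar C\cap S(\hat X))$ is finitely generated for every $n\ge 0$. Induced filtering function: $\bar\varphi(0)=(-\infty,\ldots,-\infty)$; for a non-null chain $c=\sum_{r=1}^m a^r\sigma_{j_r}$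 written in reduced form (distinct singular simplices, all $a^r\neq0$), $\bar\varphi(c)=(u_1,\ldots,u_k)$ where $u_i$ is the maximum of $\varphi_i$ on $\bigcup_r\sigma_{j_r}(\Delta_n)$. For $u\prec v$, $\rho^{\bar\varphi}_n(u,v)$ is the rank of the image of $H_n(\bar C^{\bar\varphi\preceq u})\to H_n(\bar C^{\bar\varphi\preceq v})$ induced by inclusion, where $\bar C^{\bar\varphi\preceq u}_n=\{c\in\bar C_n:\bar\varphi(c)\preceq u\}$ (equivalently $\bar C\cap S(X^{\varphi\preceq u})$). *)

theory Defs
  imports "HOL-Analysis.Analysis"
begin

definition triangulable_by :: "'b::euclidean_space set set \<Rightarrow> 'a topology \<Rightarrow> bool" where
  "triangulable_by K X \<equiv> simplicial_complex K \<and> X homeomorphic_space (subtopology euclidean (\<Union>K))"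

text \<open>Maps are compared on the underlying space only.\<close>
definition homeo_subgroup :: "'a topology \<Rightarrow> ('a \<Rightarrow> 'a) set \<Rightarrow> bool" where
  "homeo_subgroup X G \<equiv>
     (\<forall>g\<in>G. homeomorphic_map X X g)
   \<and> (\<exists>e\<in>G. \<forall>x\<in>topspace X. e x = x)
   \<and> (\<forall>g\<in>G. \<forall>h\<in>G. \<exists>k\<in>G. \<forall>x\<in>topspace X. k x = g (h x))
   \<and> (\<forall>g\<in>G. \<exists>h\<in>G. \<forall>x\<in>topspace X. h (g x) = x)"

definition std_simplex :: "nat \<Rightarrow> (nat \<Rightarrow> real) set" where
  "std_simplex p \<equiv>
    {x. (\<forall>i. 0 \<le> x i \<and> x i \<le> 1) \<and> (\<forall>i>p. x i = 0) \<and> (\<Sum>i\<le>p. x i) = 1}"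

definition sing_simplex :: "nat \<Rightarrow> 'a topology \<Rightarrow> ((nat \<Rightarrow> real) \<Rightarrow> 'a) \<Rightarrow> bool" where
  "sing_simplex p X f \<equiv>
      continuous_map (subtopology (powertop_real UNIV) (std_simplex p)) X f
    \<and> f \<in> extensional (std_simplex p)"

definition simp_face :: "nat \<Rightarrow> (nat \<Rightarrow> real) \<Rightarrow> nat \<Rightarrow> real" where
  "simp_face k x \<equiv> \<lambda>i. if i < k then x i else if i = k then 0 else x (i - 1)"

definition sing_face :: "nat \<Rightarrow> nat \<Rightarrow> ((nat \<Rightarrow> real) \<Rightarrow> 'a) \<Rightarrow> ((nat \<Rightarrow> real) \<Rightarrow> 'a)" where
  "sing_face p k f \<equiv> restrict (f \<circ> simp_face k) (std_simplex (p - 1))"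

type_synonym ('a, 'f) chain = "((nat \<Rightarrow> real) \<Rightarrow> 'a) \<Rightarrow> 'f"

definition supp :: "('a, 'f::zero) chain \<Rightarrow> ((nat \<Rightarrow> real) \<Rightarrow> 'a) set" where
  "supp c = {\<sigma>. c \<sigma> \<noteq> 0}"

text \<open>Singular n-chains with coefficients in the field 'f (n an integer; there are no
  simplices in negative degree, so those chain groups are zero).\<close>
definition chains :: "'a topology \<Rightarrow> int \<Rightarrow> ('a, 'f::field) chain set" where
  "chains X n = {c. finite (supp c) \<and> (\<forall>\<sigma>\<in>supp c. n \<ge> 0 \<and> sing_simplex (nat n) X \<sigma>)}"

definition bd :: "int \<Rightarrow> ('a, 'f::field) chain \<Rightarrow> ('a, 'f) chain" where
  "bd n c = (if n \<le> 0 then (\<lambda>_. 0) else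
     (\<lambda>\<tau>. \<Sum>\<sigma>\<in>supp c. c \<sigma> *
        (\<Sum>k\<in>{0..nat n}. if sing_face (nat n) k \<sigma> = \<tau> then (-1) ^ k else 0)))"

text \<open>Action of a homeomorphism on n-chains: g(\<sigma>) = g \<circ> \<sigma>, extended linearly.\<close>
definition push :: "int \<Rightarrow> ('a \<Rightarrow> 'a) \<Rightarrow> ('a, 'f::field) chain \<Rightarrow> ('a, 'f) chain" where
  "push n g c = (\<lambda>\<tau>. \<Sum>\<sigma>\<in>{\<sigma>\<in>supp c. restrict (g \<circ> \<sigma>) (std_simplex (nat n)) = \<tau>}. c \<sigma>)"

definition lin_span :: "('a, 'f::field) chain set \<Rightarrow> ('a, 'f) chain set" where
  "lin_span S = {c. \<exists>T a. finite T \<and> T \<subseteq> S \<and> c = (\<lambda>\<sigma>. \<Sum>s\<in>T. a s * s \<sigma>)}"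

definition is_subspace :: "('a, 'f::field) chain set \<Rightarrow> bool" where
  "is_subspace V \<longleftrightarrow> (\<lambda>_. 0) \<in> V \<and> (\<forall>x\<in>V. \<forall>y\<in>V. (\<lambda>\<sigma>. x \<sigma> + y \<sigma>) \<in> V)
      \<and> (\<forall>a. \<forall>x\<in>V. (\<lambda>\<sigma>. a * x \<sigma>) \<in> V)"

text \<open>G-chain subcomplex of S(X): a chain subcomplex such that each g in G restricts to a
  chain isomorphism of it (the pushforward is injective and commutes with the boundary,
  so this amounts to g mapping each C n onto C n).\<close>
definition G_chain_subcomplex :: "'a topology \<Rightarrow> ('a \<Rightarrow> 'a) set \<Rightarrow> (int \<Rightarrow> ('a, 'f::field) chain set) \<Rightarrow> bool" where
  "G_chain_subcomplex X G C \<longleftrightarrow>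
     (\<forall>n. C n \<subseteq> chains X n \<and> is_subspace (C n))
   \<and> (\<forall>n. \<forall>c\<in>C n. bd n c \<in> C (n - 1))
   \<and> (\<forall>g\<in>G. \<forall>n. push n g ` C n = C n)"

definition cycles :: "(int \<Rightarrow> ('a, 'f::field) chain set) \<Rightarrow> int \<Rightarrow> ('a, 'f) chain set" where
  "cycles D n = {c\<in>D n. bd n c = (\<lambda>_. 0)}"

definition bdries :: "(int \<Rightarrow> ('a, 'f::field) chain set) \<Rightarrow> int \<Rightarrow> ('a, 'f) chain set" where
  "bdries D n = bd (n + 1) ` D (n + 1)"

definition restr_cx :: "(int \<Rightarrow> ('a, 'f::field) chain set) \<Rightarrow> 'a set \<Rightarrow> int \<Rightarrow> ('a, 'f) chain set" where
  "restr_cx C Y n = {c\<in>C n. \<forall>\<sigma>\<in>supp c. \<sigma> ` std_simplex (nat n) \<subseteq> Y}"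

text \<open>H_n(D) = cycles/boundaries is finitely generated (finite-dimensional over the field):
  finitely many cycles whose classes span H_n(D).\<close>
definition homology_fg :: "(int \<Rightarrow> ('a, 'f::field) chain set) \<Rightarrow> int \<Rightarrow> bool" where
  "homology_fg D n \<longleftrightarrow> (\<exists>S. finite S \<and> S \<subseteq> cycles D n \<and> cycles D n \<subseteq> lin_span (S \<union> bdries D n))"

definition property_star :: "'a topology \<Rightarrow> (int \<Rightarrow> ('a, 'f::field) chain set) \<Rightarrow> bool" where
  "property_star X C \<longleftrightarrow>
    (\<forall>X' X''. closedin X X' \<and> closedin X X'' \<and> X' \<subseteq> X interior_of X'' \<longrightarrow>
       (\<exists>Y. X' \<subseteq> Y \<and> Y \<subseteq> X'' \<and> (\<forall>n\<ge>0. homology_fg (restr_cx C Y) n)))"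

text \<open>The filtering function induced by \<phi> on n-chains; componentwise maximum (= supremum,
  the image being compact) over the union of the images of the simplices in the reduced
  form of c; (-\<infinity>,...,-\<infinity>) on the null chain.\<close>
definition phibar :: "('a \<Rightarrow> real^'k) \<Rightarrow> int \<Rightarrow> ('a, 'f::field) chain \<Rightarrow> ereal^'k" where
  "phibar \<phi> n c = (if c = (\<lambda>_. 0) then (\<chi> j. -\<infinity>) else
     (\<chi> j. Sup ((\<lambda>x. ereal (\<phi> x $ j)) ` (\<Union>\<sigma>\<in>supp c. \<sigma> ` std_simplex (nat n)))))"

definition sublevel_cx :: "(int \<Rightarrow> ('a, 'f::field) chain set) \<Rightarrow> ('a \<Rightarrow> real^'k) \<Rightarrow> real^'k
     \<Rightarrow> int \<Rightarrow> ('a, 'f) chain set" where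
  "sublevel_cx C \<phi> u n = {c\<in>C n. \<forall>j. phibar \<phi> n c $ j \<le> ereal (u $ j)}"

text \<open>Rank of the image of H_n(C^u) \<rightarrow> H_n(C^v): the image is spanned by the classes of
  cycles of C^u modulo boundaries of C^v; its dimension is the least number of cycles of
  C^u whose classes span it (\<infinity> if no finite such set exists).\<close>
definition pbn :: "(int \<Rightarrow> ('a, 'f::field) chain set) \<Rightarrow> ('a \<Rightarrow> real^'k) \<Rightarrow> int
     \<Rightarrow> real^'k \<Rightarrow> real^'k \<Rightarrow> enat" where
  "pbn C \<phi> n u v = (INF S\<in>{S. finite S \<and> S \<subseteq> cycles (sublevel_cx C \<phi> u) n
        \<and> cycles (sublevel_cx C \<phi> u) n \<subseteq> lin_span (S \<union> bdries (sublevel_cx C \<phi> v) n)}.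
        enat (card S))"

end

theory Submission imports Defs "HOL-Library.Function_Algebras"
begin

lemma fsum_apply: "(\<Sum>s\<in>T. f s) x = (\<Sum>s\<in>T. f s x)" for f :: "'c \<Rightarrow> 'b \<Rightarrow> 'f::comm_monoid_add"
  by (induction T rule: infinite_finite_induct) auto

interpretation CV: vector_space "\<lambda>(a::'f::field) (c::'b \<Rightarrow> 'f). (\<lambda>\<sigma>. a * c \<sigma>)"
  by unfold_locales (auto simp: fun_eq_iff algebra_simps)

lemma lin_span_eq: "lin_span S = CV.span S"
  unfolding lin_span_def CV.span_explicit
  by (auto simp: fsum_apply fun_eq_iff)

lemma fin_basis:
  fixes Z B :: "('a,'f::field) chain set"
  assumes "finite T"
  shows "finite F \<Longrightarrow> F \<subseteq> Z \<Longrightarrow> Z \<subseteq> lin_span (F \<union> T \<union> B) \<Longrightarrow> \<exists>S. finite S \<and> S \<subseteq> Z \<and> Z \<subseteq> lin_span (S \<union> B)"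
  using assms(1)
proof (induction T arbitrary: F rule: finite_induct)
  case empty
  then show ?case by auto
next
  case (insert s T)
  show ?case
  proof (cases "Z \<subseteq> lin_span (F \<union> T \<union> B)")
    case True
    then show ?thesis using insert by blast
  next
    case False
    then obtain z where z: "z \<in> Z" "z \<notin> CV.span (F \<union> T \<union> B)" by (auto simp: lin_span_eq)
    have "z \<in> CV.span (insert s (F \<union> T \<union> B))" using insert.prems z(1) by (auto simp: lin_span_eq)
    then have sz: "s \<in> CV.span (insert z (F \<union> T \<union> B))" using CV.in_span_insert z(2) by blast
    have "Z \<subseteq> lin_span (insert z F \<union> T \<union> B)"
    proof
      fix w assume "w \<in> Z"
      then have "w \<in> CV.span (insert s (F \<union> T \<union> B))" using insert.prems by (auto simp: lin_span_eq)
      then have "w \<in> CV.span (insert s (insert z (F \<union> T \<union> B)))"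
        using CV.span_mono[of "insert s (F \<union> T \<union> B)" "insert s (insert z (F \<union> T \<union> B))"] by blast
      then have "w \<in> CV.span (insert z (F \<union> T \<union> B))" using CV.span_trans sz by blast
      then show "w \<in> lin_span (insert z F \<union> T \<union> B)" by (simp add: lin_span_eq)
    qed
    then show ?thesis using insert.IH[of "insert z F"] insert.prems z(1) by auto
  qed
qed


lemma simplex_in_topspace:
  assumes "c \<in> chains X n" "\<sigma> \<in> supp c" "x \<in> std_simplex (nat n)"
  shows "\<sigma> x \<in> topspace X"
proof -
  have "sing_simplex (nat n) X \<sigma>" using assms unfolding chains_def by auto
  then have "continuous_map (subtopology (powertop_real UNIV) (std_simplex (nat n))) X \<sigma>"
    unfolding sing_simplex_def by auto
  from continuous_map_image_subset_topspace[OF this] assms(3) show ?thesis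
    by (simp add: image_subset_iff)
qed

lemma closed_le_set: "closed {y::real^'k. \<forall>j. y $ j \<le> u $ j}"
  by (intro closed_Collect_all allI closed_Collect_le continuous_on_const continuous_on_component continuous_on_id)

lemma open_lt_set: "open (\<Inter>j. {y::real^'k. y $ j < v $ j})"
  by (intro open_INT finite allI ballI open_Collect_less continuous_on_const continuous_on_component continuous_on_id)

theorem mainTheorem2:
  fixes X :: "'a topology" and K :: "('m::euclidean_space) set set"
    and G :: "('a \<Rightarrow> 'a) set" and \<phi> :: "'a \<Rightarrow> real^'k"
    and C :: "int \<Rightarrow> ('a, 'f::field) chain set"
    and n :: int and u v :: "real^'k"
  assumes "triangulable_by K X"
    and "homeo_subgroup X G"
    and "continuous_map X euclidean \<phi>"
    and "G_chain_subcomplex X G C"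
    and "property_star X C"
    and "\<forall>j. u $ j < v $ j"
  shows "pbn C \<phi> n u v \<noteq> \<infinity>"
proof -
  have Cch: "C m \<subseteq> chains X m" for m using assms(4) unfolding G_chain_subcomplex_def by auto
  define Zu where "Zu = cycles (sublevel_cx C \<phi> u) n"
  define Bv where "Bv = bdries (sublevel_cx C \<phi> v) n"
  have ex: "\<exists>S. finite S \<and> S \<subseteq> Zu \<and> Zu \<subseteq> lin_span (S \<union> Bv)"
  proof (cases "n < 0")
    case True
    have "Zu \<subseteq> lin_span ({} \<union> Bv)"
    proof
      fix c assume "c \<in> Zu"
      then have "c \<in> chains X n" using Cch unfolding Zu_def cycles_def sublevel_cx_def by auto
      then have "supp c = {}" using True unfolding chains_def by auto
      then have "c = 0" by (auto simp: supp_def fun_eq_iff)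
      then show "c \<in> lin_span ({} \<union> Bv)" using CV.span_zero by (simp add: lin_span_eq)
    qed
    then show ?thesis by blast
  next
    case False
    define X1 where "X1 = {x \<in> topspace X. \<phi> x \<in> {y. \<forall>j. y $ j \<le> u $ j}}"
    define X2 where "X2 = {x \<in> topspace X. \<phi> x \<in> {y. \<forall>j. y $ j \<le> v $ j}}"
    define U where "U = {x \<in> topspace X. \<phi> x \<in> (\<Inter>j. {y. y $ j < v $ j})}"
    have cl1: "closedin X X1" unfolding X1_def
      by (rule closedin_continuous_map_preimage[OF assms(3)])
        (simp add: closed_le_set)
    have cl2: "closedin X X2" unfolding X2_def
      by (rule closedin_continuous_map_preimage[OF assms(3)])
        (simp add: closed_le_set)
    have opU: "openin X U" unfolding U_def
      by (rule openin_continuous_map_preimage[OF assms(3)])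
        (simp add: open_lt_set)
    have "U \<subseteq> X2" unfolding U_def X2_def by (auto intro: less_imp_le)
    then have "U \<subseteq> X interior_of X2" using opU by (rule interior_of_maximal)
    moreover have "X1 \<subseteq> U" unfolding U_def X1_def using assms(6) by (auto intro: le_less_trans)
    ultimately have "X1 \<subseteq> X interior_of X2" by blast
    then have "\<exists>Y. X1 \<subseteq> Y \<and> Y \<subseteq> X2 \<and> (\<forall>m\<ge>0. homology_fg (restr_cx C Y) m)"
      using assms(5)[unfolded property_star_def, rule_format, of X1 X2] cl1 cl2 by simp
    then obtain Y where Y: "X1 \<subseteq> Y" "Y \<subseteq> X2" "\<forall>m\<ge>0. homology_fg (restr_cx C Y) m"
      by (elim exE conjE) simp
    have "homology_fg (restr_cx C Y) n" using Y(3) False by simp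
    then obtain S' where S': "finite S'" "S' \<subseteq> cycles (restr_cx C Y) n"
      "cycles (restr_cx C Y) n \<subseteq> lin_span (S' \<union> bdries (restr_cx C Y) n)"
      unfolding homology_fg_def by (elim exE conjE) simp
    have sub1: "sublevel_cx C \<phi> u n \<subseteq> restr_cx C Y n"
    proof
      fix c assume c: "c \<in> sublevel_cx C \<phi> u n"
      have "\<sigma> ` std_simplex (nat n) \<subseteq> Y" if s: "\<sigma> \<in> supp c" for \<sigma>
      proof
        fix y assume "y \<in> \<sigma> ` std_simplex (nat n)"
        then obtain x where x: "x \<in> std_simplex (nat n)" "y = \<sigma> x" by auto
        have top: "y \<in> topspace X" using simplex_in_topspace[of c X n \<sigma> x] c Cch x s
          unfolding sublevel_cx_def by auto
        have cnz: "c \<noteq> (\<lambda>_. 0)" using s by (auto simp: supp_def)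
        have "\<phi> y $ j \<le> u $ j" for j
        proof -
          have mem: "ereal (\<phi> y $ j) \<in> (\<lambda>x. ereal (\<phi> x $ j)) ` (\<Union>\<sigma>\<in>supp c. \<sigma> ` std_simplex (nat n))"
            using s x by blast
          have eq: "phibar \<phi> n c $ j = Sup ((\<lambda>x. ereal (\<phi> x $ j)) ` (\<Union>\<sigma>\<in>supp c. \<sigma> ` std_simplex (nat n)))"
            unfolding phibar_def using cnz by simp
          have "ereal (\<phi> y $ j) \<le> phibar \<phi> n c $ j"
            unfolding eq by (rule Sup_upper[OF mem])
          also have "\<dots> \<le> ereal (u $ j)" using c unfolding sublevel_cx_def by auto
          finally show ?thesis by simp
        qed
        then show "y \<in> Y" using Y(1) top unfolding X1_def by auto
      qed
      then show "c \<in> restr_cx C Y n" using c unfolding restr_cx_def sublevel_cx_def by auto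
    qed
    have sub2: "restr_cx C Y (n+1) \<subseteq> sublevel_cx C \<phi> v (n+1)"
    proof
      fix c assume c: "c \<in> restr_cx C Y (n+1)"
      have "phibar \<phi> (n+1) c $ j \<le> ereal (v $ j)" for j
      proof (cases "c = (\<lambda>_. 0)")
        case True then show ?thesis by (simp add: phibar_def)
      next
        case False
        have hle: "\<phi> y $ j \<le> v $ j" if "y \<in> (\<Union>\<sigma>\<in>supp c. \<sigma> ` std_simplex (nat (n+1)))" for y
        proof -
          have "\<forall>\<sigma>\<in>supp c. \<sigma> ` std_simplex (nat (n+1)) \<subseteq> Y" using c unfolding restr_cx_def by simp
          then have "y \<in> Y" using that by blast
          then have "y \<in> X2" using Y(2) by blast
          then show ?thesis unfolding X2_def by simp
        qed
        have eq: "phibar \<phi> (n+1) c $ j = Sup ((\<lambda>x. ereal (\<phi> x $ j)) ` (\<Union>\<sigma>\<in>supp c. \<sigma> ` std_simplex (nat (n+1))))"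
          unfolding phibar_def using False by simp
        show ?thesis unfolding eq
        proof (rule Sup_least)
          fix z assume "z \<in> (\<lambda>x. ereal (\<phi> x $ j)) ` (\<Union>\<sigma>\<in>supp c. \<sigma> ` std_simplex (nat (n+1)))"
          then obtain y where y: "y \<in> (\<Union>\<sigma>\<in>supp c. \<sigma> ` std_simplex (nat (n+1)))" "z = ereal (\<phi> y $ j)"
            by (rule imageE)
          show "z \<le> ereal (v $ j)" using hle[OF y(1)] y(2) by simp
        qed
      qed
      moreover have "c \<in> C (n+1)" using c unfolding restr_cx_def by simp
      ultimately show "c \<in> sublevel_cx C \<phi> v (n+1)" unfolding sublevel_cx_def by simp
    qed
    have z: "Zu \<subseteq> cycles (restr_cx C Y) n" using sub1 unfolding Zu_def cycles_def by auto
    have b: "bdries (restr_cx C Y) n \<subseteq> Bv" using sub2 unfolding Bv_def bdries_def by auto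
    have "Zu \<subseteq> lin_span ({} \<union> S' \<union> Bv)"
    proof -
      have "lin_span (S' \<union> bdries (restr_cx C Y) n) \<subseteq> lin_span (S' \<union> Bv)"
        using b unfolding lin_span_eq by (intro CV.span_mono) auto
      then show ?thesis using z S'(3) by auto
    qed
    from fin_basis[OF S'(1) _ _ this] show ?thesis by auto
  qed
  then obtain S where S: "finite S" "S \<subseteq> Zu" "Zu \<subseteq> lin_span (S \<union> Bv)" by blast
  have "pbn C \<phi> n u v \<le> enat (card S)"
    unfolding pbn_def by (rule INF_lower) (use S in \<open>auto simp: Zu_def Bv_def\<close>)
  then show ?thesis by (cases "pbn C \<phi> n u v") auto
qed

end
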